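(* Let $\mathbf x,\mathbf m\in\mathbb C^d$ with $\operatorname{supp}(\widehat{\mathbf x})\subseteq[\gamma]_0$ and $\operatorname{supp}(\mathbf m)\subseteq[\delta]_0$, let $N\in\mathbb R^{d\times d}$, and let $K,L$ divide $d$. Let $\widetilde Y=F_LY_{K,L}^TF_K^T$ and $\widetilde N=F_LN_{K,L}^TF_K^T$. Suppose $K=\delta-1+\kappa$ for some integer $2\le\kappa\le\delta$ and $L=\gamma-1+\xi$ for some integer $1\le\xi\le\gamma$. Then for $\alpha\in[L]_0$ and $\omega\in[K]_0$: (i) if $0\le\alpha\le\xi-1$ and $0\le\omega\le\kappa-1$, then $\widetilde Y_{\alpha,\omega}=\frac{KL}{d^3}\left(F_d(\widehat{\mathbf x}\circ S_{-\alpha}\overline{\widehat{\mathbf x}})\right)_\omega\left(F_d(\widehat{\mathbf m}\circ S_\alpha\overline{\widehat{\mathbf m}})\right)_\omega+\widetilde N_{\alpha,\omega}$; (ii) if $0\le\alpha\le\xi-1$ and $\delta\le\omega\le K-1$, then $\widetilde Y_{\alpha,\omega}=\frac{KL}{d^3}\left(F_d(\widehat{\mathbf x}\circ S_{-\alpha}\overline{\widehat{\mathbf x}})\right)_{\omega-K}\left(F_d(\widehat{\mathbf m}\circ S_\alpha\overline{\widehat{\mathbf m}})\right)_{\omega-K}+\widetilde N_{\alpha,\omega}$; (iii) if $\gamma\le\alpha\le L-1$ and $0\le\omega\le\kappa-1$, then $\widetilde Y_{\alpha,\omega}=\frac{KL}{d^3}\left(F_d(\widehat{\mathbf x}\circ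 S_{L-\alpha}\overline{\widehat{\mathbf x}})\right)_\omega\left(F_d(\widehat{\mathbf m}\circ S_{\alpha-L}\overline{\widehat{\mathbf m}})\right)_\omega+\widetilde N_{\alpha,\omega}$; (iv) if $\gamma\le\alpha\le L-1$ and $\delta\le\omega\le K-1$, then $\widetilde Y_{\alpha,\omega}=\frac{KL}{d^3}\left(F_d(\widehat{\mathbf x}\circ S_{L-\alpha}\overline{\widehat{\mathbf x}})\right)_{\omega-K}\left(F_d(\widehat{\mathbf m}\circ S_{\alpha-L}\overline{\widehat{\mathbf m}})\right)_{\omega-K}+\widetilde N_{\alpha,\omega}$.
   Context: Vectors in $\mathbb C^d$ are indexed by $[d]_0=\{0,1,\dots,d-1\}$, with all indices interpreted modulo $d$. $F_n$ denotes the $n\times n$ DFT matrix $(F_n)_{j,k}=e^{-2\pi i jk/n}$, and $\widehat{\mathbf x}=F_d\mathbf x$. The shift is $(S_\ell\mathbf x)_n=x_{n+\ell}$; $\circ$ is the entrywise product and $\overline{\mathbf x}$ the entrywise conjugate; $\operatorname{supp}(\mathbf x)=\{n:x_n\neq0\}$. Measurements: given $\mathbf x,\mathbf m\in\mathbb C^d$ and an arbitrary real noise matrix $N\in\mathbb R^{d\times d}$, $Y\in\mathbb R^{d\times d}$ has entries $Y_{k,\ell}=\left|\sum_{n=0}^{d-1}x_nm_{n-\ell}e^{-2\pi i nk/d}\right|^2+N_{k,\ell}$ for $k,\ell\in[d]_0$. For positive integers $K,L$ dividing $d$, $Y_{K,L}$ is the $K\times L$ matrix $(Y_{K,L})_{k,\ell}=Y_{kd/K,\ell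 d/L}$ and $N_{K,L}$ is defined analogously from $N$. $\widetilde Y$ has rows indexed by $[L]_0$ and columns by $[K]_0$. *)

theory Defs
  imports Complex_Main "Jordan_Normal_Form.Matrix"
begin

text \<open>Vectors in C^d are Jordan_Normal_Form vectors of dimension d, indexed by 0..d-1;
  indices are read modulo the dimension where needed.\<close>

definition dft_mat :: "nat \<Rightarrow> complex mat" where
  "dft_mat n = mat n n (\<lambda>(j,k). exp (- 2 * of_real pi * \<i> * of_nat j * of_nat k / of_nat n))"

definition hatv :: "complex vec \<Rightarrow> complex vec" where
  "hatv x = dft_mat (dim_vec x) *\<^sub>v x"

definition idx :: "complex vec \<Rightarrow> int \<Rightarrow> complex" where
  "idx v j = v $ nat (j mod int (dim_vec v))"

definition shiftv :: "int \<Rightarrow> complex vec \<Rightarrow> complex vec" where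
  "shiftv l x = vec (dim_vec x) (\<lambda>n. idx x (int n + l))"

definition hadamard :: "complex vec \<Rightarrow> complex vec \<Rightarrow> complex vec" where
  "hadamard u v = vec (dim_vec u) (\<lambda>n. u $ n * v $ n)"

definition conjv :: "complex vec \<Rightarrow> complex vec" where
  "conjv v = map_vec cnj v"

definition meas :: "nat \<Rightarrow> complex vec \<Rightarrow> complex vec \<Rightarrow> real mat \<Rightarrow> real mat" where
  "meas d x m N = mat d d (\<lambda>(k,l).
     (cmod (\<Sum>n<d. x $ n * idx m (int n - int l)
              * exp (- 2 * of_real pi * \<i> * of_nat n * of_nat k / of_nat d)))\<^sup>2 + N $$ (k,l))"

definition subsamp :: "nat \<Rightarrow> nat \<Rightarrow> nat \<Rightarrow> real mat \<Rightarrow> real mat" where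
  "subsamp d K L A = mat K L (\<lambda>(k,l). A $$ (k * d div K, l * d div L))"

definition tildeT :: "nat \<Rightarrow> nat \<Rightarrow> real mat \<Rightarrow> complex mat" where
  "tildeT K L A = dft_mat L * transpose_mat (map_mat complex_of_real A) * transpose_mat (dft_mat K)"

end

theory Submission
  imports Defs
begin

definition ee :: "nat \<Rightarrow> int \<Rightarrow> complex" where
  "ee n t = cis (- 2 * pi * of_int t / of_nat n)"

lemma ee_add: "ee n (a + b) = ee n a * ee n b"
  unfolding ee_def cis_mult by (rule arg_cong[where f=cis]) (cases "n = 0", simp_all add: field_simps)

lemma ee_zero[simp]: "ee n 0 = 1"
  by (simp add: ee_def)

lemma ee_cnj: "cnj (ee n a) = ee n (- a)"
  by (simp add: ee_def cis_cnj)

lemma ee_period: assumes "n > 0" shows "ee n (int n * q) = 1"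
proof -
  have "- 2 * pi * of_int (int n * q) / of_nat n = 2 * pi * of_int (- q)"
    using assms by (simp add: field_simps)
  then show ?thesis unfolding ee_def by (metis Ints_of_int cis_multiple_2pi)
qed

lemma ee_mod: assumes "n > 0" shows "ee n (a mod int n) = ee n a"
proof -
  have "ee n a = ee n (a mod int n + int n * (a div int n))" by (metis mod_mult_div_eq)
  also have "\<dots> = ee n (a mod int n)" by (simp only: ee_add ee_period[OF assms] mult_1_right)
  finally show ?thesis by simp
qed

lemma ee_pow: "ee n a ^ p = ee n (int p * a)"
  by (simp add: ee_def DeMoivre algebra_simps)

lemma ee_eq1: assumes "n > 0" shows "ee n u = 1 \<longleftrightarrow> int n dvd u"
proof
  assume "int n dvd u" then obtain q where "u = int n * q" by auto
  then show "ee n u = 1" using ee_period assms by simp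
next
  assume "ee n u = 1"
  then have "cos (- 2 * pi * of_int u / of_nat n) = 1" unfolding ee_def
    by (metis complex.sel(1) cis.sel(1) one_complex.sel(1))
  then obtain k :: int where k: "- 2 * pi * of_int u / of_nat n = real_of_int k * 2 * pi"
    using cos_one_2pi_int by blast
  then have "- (pi * real_of_int u) = pi * (real_of_int k * real n)" using assms pi_gt_zero
    by (simp add: field_simps)
  then have "pi * (real_of_int u + real_of_int k * real n) = 0" by (simp add: algebra_simps)
  then have "real_of_int u = - (of_int k * of_nat n)" by simp
  then have "u = - (k * int n)"
    by (metis of_int_eq_iff of_int_minus of_int_mult of_int_of_nat_eq)
  then show "int n dvd u" by simp
qed

lemma ee_sum: assumes "n > 0"
  shows "(\<Sum>p<n. ee n (int p * u)) = (if int n dvd u then of_nat n else 0)"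
proof (cases "int n dvd u")
  case True
  then obtain q where "u = int n * q" by auto
  then have "\<And>p. ee n (int p * u) = 1" using ee_period[OF assms, of "int p * q" for p]
    by (simp add: algebra_simps)
  then show ?thesis using True by simp
next
  case False
  then have ne: "ee n u \<noteq> 1" using ee_eq1[OF assms] by simp
  have "(\<Sum>p<n. ee n (int p * u)) = (\<Sum>p<n. ee n u ^ p)" by (simp add: ee_pow)
  also have "\<dots> = (ee n u ^ n - 1) / (ee n u - 1)" using ne by (rule geometric_sum)
  also have "ee n u ^ n = 1" using ee_pow ee_period[OF assms] by simp
  finally show ?thesis using False by simp
qed

lemma ee_scale: assumes "M > 0" "d = M * q" "d > 0"
  shows "ee d (int (l * q) * u) = ee M (int l * u)"
proof -
  have "q > 0" using assms by (simp add: gr0I)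
  then show ?thesis using assms unfolding ee_def by (simp add: field_simps)
qed

lemma dft_entry: "exp (- 2 * of_real pi * \<i> * of_nat j * of_nat k / of_nat n) = ee n (int j * int k)"
  unfolding ee_def cis_conv_exp by (simp add: algebra_simps)


lemma dft_mat_ee: "dft_mat n = mat n n (\<lambda>(j,k). ee n (int j * int k))"
  unfolding dft_mat_def dft_entry ..

lemma hatv_entry: assumes "dim_vec v = d" "j < d"
  shows "hatv v $ j = (\<Sum>r<d. v $ r * ee d (int r * int j))"
  using assms unfolding hatv_def
  by (auto simp: dft_mat_ee scalar_prod_def atLeast0LessThan mult.commute intro!: sum.cong)

lemma tildeT_entry: assumes "A \<in> carrier_mat K L" "\<alpha> < L" "\<omega> < K"
  shows "tildeT K L A $$ (\<alpha>,\<omega>) =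
    (\<Sum>k<K. \<Sum>l<L. ee L (int \<alpha> * int l) * complex_of_real (A $$ (k,l)) * ee K (int \<omega> * int k))"
  using assms unfolding tildeT_def
  by (auto simp: dft_mat_ee scalar_prod_def atLeast0LessThan sum_distrib_right sum_distrib_left mult.commute
     intro!: sum.cong)


lemma ee_mult2: "ee n a * ee n b = ee n (a + b)"
  by (simp add: ee_add)

lemma dvd_small: assumes "(P::int) dvd u" "\<bar>u\<bar> < P" shows "u = 0"
proof (rule ccontr)
  assume "u \<noteq> 0"
  then have "\<bar>P\<bar> \<le> \<bar>u\<bar>" using dvd_imp_le_int assms(1) by blast
  then show False using assms(2) by linarith
qed

lemma window:
  fixes P D r s a b :: int
  assumes "0 < P" "P \<le> D" "P dvd (r - s)" "\<bar>b - a + s\<bar> < P" "0 \<le> b" "b < D"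
  shows "P dvd (r + b - a) \<longleftrightarrow> b = (a - s) mod D"
proof -
  have "P dvd (r + b - a) \<longleftrightarrow> P dvd (b - a + s)"
  proof -
    have "r + b - a = (b - a + s) + (r - s)" by simp
    then show ?thesis using assms(3) by (metis dvd_add_left_iff)
  qed
  also have "\<dots> \<longleftrightarrow> b - a + s = 0" using dvd_small assms(4) by auto
  also have "\<dots> \<longleftrightarrow> b = (a - s) mod D"
  proof
    assume "b - a + s = 0" then have "b = a - s" by simp
    then show "b = (a - s) mod D" using assms(5,6) by simp
  next
    assume h: "b = (a - s) mod D"
    then have "b mod D = (a - s) mod D" using assms(5,6) by simp
    then have "D dvd (b - (a - s))" by (simp add: mod_eq_dvd_iff)
    then have "b - (a - s) = 0" using dvd_small[of D "b - (a - s)"] assms by auto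
    then show "b - a + s = 0" by simp
  qed
  finally show ?thesis .
qed

lemma sum_dvd_delta:
  fixes f :: "nat \<Rightarrow> complex" and c :: complex
  assumes "q < d"
  shows "(\<Sum>r<d. f r * (if int d dvd (int r - int q) then c else 0)) = f q * c"
proof -
  have "\<And>r. r < d \<Longrightarrow> (int d dvd (int r - int q)) = (r = q)"
  proof -
    fix r assume "r < d"
    show "(int d dvd (int r - int q)) = (r = q)"
    proof
      assume "int d dvd (int r - int q)"
      then have "int r - int q = 0" using dvd_small[of "int d"] \<open>r < d\<close> assms by fastforce
      then show "r = q" by simp
    qed simp
  qed
  then have "(\<Sum>r<d. f r * (if int d dvd (int r - int q) then c else 0)) = (\<Sum>r<d. if r = q then f r * c else 0)"
    by (intro sum.cong) auto
  also have "\<dots> = f q * c" using assms by (simp add: sum.delta')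
  finally show ?thesis .
qed

lemma inv_dft: assumes "dim_vec v = d" "0 < d" "q < d"
  shows "v $ q = (1 / of_nat d) * (\<Sum>j<d. hatv v $ j * ee d (- (int q * int j)))"
proof -
  have "(\<Sum>j<d. hatv v $ j * ee d (- (int q * int j)))
      = (\<Sum>j<d. \<Sum>r<d. v $ r * ee d (int j * (int r - int q)))"
  proof (rule sum.cong[OF refl])
    fix j assume "j \<in> {..<d}"
    then have "hatv v $ j * ee d (- (int q * int j)) = (\<Sum>r<d. v $ r * (ee d (int r * int j) * ee d (- (int q * int j))))"
      using assms by (simp add: hatv_entry sum_distrib_right mult.assoc)
    also have "\<dots> = (\<Sum>r<d. v $ r * ee d (int j * (int r - int q)))"
      by (intro sum.cong refl) (simp add: ee_mult2 algebra_simps)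
    finally show "hatv v $ j * ee d (- (int q * int j)) = (\<Sum>r<d. v $ r * ee d (int j * (int r - int q)))" .
  qed
  also have "\<dots> = (\<Sum>r<d. v $ r * (\<Sum>j<d. ee d (int j * (int r - int q))))"
    by (subst sum.swap) (simp add: sum_distrib_left)
  also have "\<dots> = (\<Sum>r<d. v $ r * (if int d dvd (int r - int q) then of_nat d else 0))"
    using assms by (simp add: ee_sum)
  also have "\<dots> = v $ q * of_nat d" using sum_dvd_delta assms by blast
  finally show ?thesis using assms by simp
qed


lemma mod_shift_iff:
  assumes "0 < d" "n < d" "p < d"
  shows "(p = nat ((int n - l) mod int d)) \<longleftrightarrow> (n = nat ((int p + l) mod int d))"
proof -
  have "(p = nat ((int n - l) mod int d)) \<longleftrightarrow> int p mod int d = (int n - l) mod int d"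
    using assms by (auto simp: nat_eq_iff)
  also have "\<dots> \<longleftrightarrow> int d dvd (int p - (int n - l))" by (simp add: mod_eq_dvd_iff)
  also have "\<dots> \<longleftrightarrow> int d dvd (int n - (int p + l))"
  proof -
    have "int p - (int n - l) = - (int n - (int p + l))" by simp
    then show ?thesis by (simp only: dvd_minus_iff)
  qed
  also have "\<dots> \<longleftrightarrow> int n mod int d = (int p + l) mod int d" by (simp add: mod_eq_dvd_iff)
  also have "\<dots> \<longleftrightarrow> (n = nat ((int p + l) mod int d))"
    using assms by (auto simp: nat_eq_iff)
  finally show ?thesis .
qed

lemma ee_modmul: "0 < d \<Longrightarrow> ee d ((a mod int d) * t) = ee d (a * t)"
  by (metis ee_mod mod_mult_left_eq)

definition gsum :: "nat \<Rightarrow> complex vec \<Rightarrow> complex vec \<Rightarrow> nat \<Rightarrow> nat \<Rightarrow> complex" where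
  "gsum d x m k l = (\<Sum>n<d. x $ n * idx m (int n - int l)
              * exp (- 2 * of_real pi * \<i> * of_nat n * of_nat k / of_nat d))"

lemma gsum_ee: "gsum d x m k l = (\<Sum>n<d. x $ n * idx m (int n - int l) * ee d (int n * int k))"
  unfolding gsum_def dft_entry ..

lemma g_expand:
  assumes "dim_vec x = d" "dim_vec m = d" "0 < d"
  shows "gsum d x m k l = (1 / of_nat d) *
     (\<Sum>j<d. \<Sum>p<d. hatv x $ j * m $ p * ee d ((int p + int l) * (int k - int j)))"
proof -
  define n0 where "n0 p = nat ((int p + int l) mod int d)" for p
  have n0d: "n0 p < d" for p unfolding n0_def using assms(3)
    by (simp add: nat_less_iff)
  have n0i: "int (n0 p) = (int p + int l) mod int d" for p unfolding n0_def using assms(3) by simp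
  have "gsum d x m k l = (\<Sum>n<d. \<Sum>p<d. if p = nat ((int n - int l) mod int d)
            then x $ n * m $ p * ee d (int n * int k) else 0)"
    unfolding gsum_ee
  proof (rule sum.cong[OF refl])
    fix n assume "n \<in> {..<d}"
    have lt: "nat ((int n - int l) mod int d) < d" using assms(3) by (simp add: nat_less_iff)
    show "x $ n * idx m (int n - int l) * ee d (int n * int k) = (\<Sum>p<d. if p = nat ((int n - int l) mod int d)
            then x $ n * m $ p * ee d (int n * int k) else 0)"
      using lt assms by (simp add: idx_def sum.delta')
  qed
  also have "\<dots> = (\<Sum>p<d. \<Sum>n<d. if n = n0 p
            then x $ n * m $ p * ee d (int n * int k) else 0)"
    apply (subst sum.swap)
  proof (intro sum.cong refl)
    fix p n assume "p \<in> {..<d}" "n \<in> {..<d}"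
    then have "n < d" "p < d" by auto
    from mod_shift_iff[OF assms(3) this, of "int l"]
    have "(p = nat ((int n - int l) mod int d)) = (n = n0 p)" unfolding n0_def .
    then show "(if p = nat ((int n - int l) mod int d) then x $ n * m $ p * ee d (int n * int k) else 0) =
       (if n = n0 p then x $ n * m $ p * ee d (int n * int k) else 0)" by simp
  qed
  also have "\<dots> = (\<Sum>p<d. x $ n0 p * m $ p * ee d (int (n0 p) * int k))"
    using n0d by (simp add: sum.delta')
  also have "\<dots> = (\<Sum>p<d. (1 / of_nat d) * (\<Sum>j<d. hatv x $ j * m $ p * ee d ((int p + int l) * (int k - int j))))"
  proof (rule sum.cong[OF refl])
    fix p assume "p \<in> {..<d}"
    have "x $ n0 p * m $ p * ee d (int (n0 p) * int k)
       = (1 / of_nat d) * (\<Sum>j<d. hatv x $ j * m $ p * (ee d (- (int (n0 p) * int j)) * ee d (int (n0 p) * int k)))"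
      using inv_dft[OF assms(1) assms(3) n0d[of p]]
      by (simp add: sum_distrib_right sum_distrib_left mult_ac)
    also have "\<dots> = (1 / of_nat d) * (\<Sum>j<d. hatv x $ j * m $ p * ee d ((int p + int l) * (int k - int j)))"
    proof -
      have "ee d (- (int (n0 p) * int j)) * ee d (int (n0 p) * int k) = ee d ((int p + int l) * (int k - int j))" for j
      proof -
        have "ee d (- (int (n0 p) * int j)) * ee d (int (n0 p) * int k) = ee d (int (n0 p) * (int k - int j))"
          by (simp add: ee_mult2 algebra_simps)
        also have "\<dots> = ee d ((int p + int l) * (int k - int j))"
          unfolding n0i using ee_modmul[OF assms(3)] by simp
        finally show ?thesis .
      qed
      then show ?thesis by simp
    qed
    finally show "x $ n0 p * m $ p * ee d (int (n0 p) * int k)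
       = (1 / of_nat d) * (\<Sum>j<d. hatv x $ j * m $ p * ee d ((int p + int l) * (int k - int j)))" .
  qed
  also have "\<dots> = (1 / of_nat d) *
     (\<Sum>j<d. \<Sum>p<d. hatv x $ j * m $ p * ee d ((int p + int l) * (int k - int j)))"
    by (simp only: sum_distrib_left[symmetric], rule arg_cong[where f="\<lambda>z. (1 / of_nat d) * z"], rule sum.swap)
  finally show ?thesis .
qed


lemma ee_scale_int: assumes "0 < M" "d = M * q" "0 < d"
  shows "ee d (a * int q * u) = ee M (a * u)"
proof -
  have "q > 0" using assms by (simp add: gr0I)
  then show ?thesis using assms unfolding ee_def by (simp add: field_simps)
qed

lemma phase:
  fixes a l w k p p' j j' :: int
  assumes "0 < K" "0 < L" "0 < d" "d = K * qK" "d = L * qL"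
  shows "ee L (a * l) * ee d ((p + l * int qL) * (k * int qK - j)) * ee d (- ((p' + l * int qL) * (k * int qK - j'))) * ee K (w * k)
    = ee d (p' * j' - p * j) * (ee K (k * (w + p - p')) * ee L (l * (a + j' - j)))"
proof -
  have e: "(p + l * int qL) * (k * int qK - j) + - ((p' + l * int qL) * (k * int qK - j'))
     = (p' * j' - p * j) + k * int qK * (p - p') + l * int qL * (j' - j)"
    by (simp add: algebra_simps)
  have "ee d ((p + l * int qL) * (k * int qK - j)) * ee d (- ((p' + l * int qL) * (k * int qK - j')))
     = ee d ((p' * j' - p * j) + k * int qK * (p - p') + l * int qL * (j' - j))"
    by (simp only: ee_mult2 e)
  also have "\<dots> = ee d (p' * j' - p * j) * ee d (k * int qK * (p - p')) * ee d (l * int qL * (j' - j))"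
    by (simp only: ee_add)
  also have "\<dots> = ee d (p' * j' - p * j) * ee K (k * (p - p')) * ee L (l * (j' - j))"
    using ee_scale_int[OF assms(1) assms(4) assms(3)] ee_scale_int[OF assms(2) assms(5) assms(3)] by simp
  finally have E12: "ee d ((p + l * int qL) * (k * int qK - j)) * ee d (- ((p' + l * int qL) * (k * int qK - j')))
     = ee d (p' * j' - p * j) * ee K (k * (p - p')) * ee L (l * (j' - j))" .
  have "ee L (a * l) * ee d ((p + l * int qL) * (k * int qK - j)) * ee d (- ((p' + l * int qL) * (k * int qK - j'))) * ee K (w * k)
     = ee L (a * l) * ee K (w * k) * (ee d ((p + l * int qL) * (k * int qK - j)) * ee d (- ((p' + l * int qL) * (k * int qK - j'))))"
    by (simp only: mult_ac)
  also have "\<dots> = ee d (p' * j' - p * j) * ((ee K (w * k) * ee K (k * (p - p'))) * (ee L (a * l) * ee L (l * (j' - j))))"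
    unfolding E12 by (simp only: mult_ac)
  also have "ee K (w * k) * ee K (k * (p - p')) = ee K (k * (w + p - p'))"
    unfolding ee_mult2 by (rule arg_cong[where f="ee K"]) (simp add: algebra_simps)
  also have "ee L (a * l) * ee L (l * (j' - j)) = ee L (l * (a + j' - j))"
    unfolding ee_mult2 by (rule arg_cong[where f="ee L"]) (simp add: algebra_simps)
  finally show ?thesis .
qed

lemma swap_out: "(\<Sum>k\<in>A. \<Sum>l\<in>B. \<Sum>j\<in>C. f k l j) = (\<Sum>j\<in>C. \<Sum>k\<in>A. \<Sum>l\<in>B. f k l j)"
proof -
  have "(\<Sum>k\<in>A. \<Sum>l\<in>B. \<Sum>j\<in>C. f k l j) = (\<Sum>k\<in>A. \<Sum>j\<in>C. \<Sum>l\<in>B. f k l j)"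
    by (rule sum.cong[OF refl], rule sum.swap)
  also have "\<dots> = (\<Sum>j\<in>C. \<Sum>k\<in>A. \<Sum>l\<in>B. f k l j)" by (rule sum.swap)
  finally show ?thesis .
qed


lemma ee_mod2: assumes "0 < d"
  shows "ee d ((a mod int d) * (b mod int d) + c) = ee d (a * b + c)"
proof -
  have "ee d ((a mod int d) * (b mod int d)) = ee d (a * (b mod int d))" using ee_modmul[OF assms] by simp
  also have "\<dots> = ee d ((b mod int d) * a)" by (simp add: mult.commute)
  also have "\<dots> = ee d (b * a)" using ee_modmul[OF assms] by simp
  finally show ?thesis by (simp add: ee_add mult.commute)
qed

lemma dim_hatv[simp]: "dim_vec (hatv v) = dim_vec v"
  by (simp add: hatv_def dft_mat_ee)

lemma idx_dft:
  assumes "dim_vec v = d" "0 < d"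
  shows "idx (dft_mat d *\<^sub>v hadamard (hatv v) (shiftv s' (conjv (hatv v)))) t
    = (\<Sum>j<d. hatv v $ j * cnj (hatv v $ nat ((int j + s') mod int d)) * ee d (int j * t))"
proof -
  define i where "i = nat (t mod int d)"
  have id: "i < d" unfolding i_def using assms by (simp add: nat_less_iff)
  have ii: "int i = t mod int d" unfolding i_def using assms by simp
  have lt: "nat ((int j + s') mod int d) < d" for j using assms by (simp add: nat_less_iff)
  have dimw: "dim_vec (dft_mat d *\<^sub>v hadamard (hatv v) (shiftv s' (conjv (hatv v)))) = d"
    by (simp add: dft_mat_ee)
  have "idx (dft_mat d *\<^sub>v hadamard (hatv v) (shiftv s' (conjv (hatv v)))) t
     = (dft_mat d *\<^sub>v hadamard (hatv v) (shiftv s' (conjv (hatv v)))) $ i"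
    unfolding idx_def dimw i_def ..
  also have "\<dots> = (\<Sum>j<d. ee d (int i * int j) * (hatv v $ j * cnj (hatv v $ nat ((int j + s') mod int d))))"
    using assms id lt
    by (auto simp: dft_mat_ee scalar_prod_def atLeast0LessThan hadamard_def shiftv_def conjv_def idx_def
        intro!: sum.cong)
  also have "\<dots> = (\<Sum>j<d. hatv v $ j * cnj (hatv v $ nat ((int j + s') mod int d)) * ee d (int j * t))"
  proof (intro sum.cong refl)
    fix j
    have "ee d (int i * int j) = ee d (int j * t)" unfolding ii using ee_modmul[OF assms(2)]
      by (simp add: mult.commute)
    then show "ee d (int i * int j) * (hatv v $ j * cnj (hatv v $ nat ((int j + s') mod int d)))
      = hatv v $ j * cnj (hatv v $ nat ((int j + s') mod int d)) * ee d (int j * t)" by simp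
  qed
  finally show ?thesis .
qed

lemma idxB:
  assumes "dim_vec v = d" "0 < d"
  shows "idx (dft_mat d *\<^sub>v hadamard (hatv v) (shiftv s (conjv (hatv v)))) t
    = of_nat d * (\<Sum>p<d. v $ p * cnj (v $ nat ((int p + t) mod int d)) * ee d (- ((int p + t) * s)))"
proof -
  have "idx (dft_mat d *\<^sub>v hadamard (hatv v) (shiftv s (conjv (hatv v)))) t
     = (\<Sum>q<d. hatv v $ q * cnj (hatv v $ nat ((int q + s) mod int d)) * ee d (int q * t))"
    by (rule idx_dft[OF assms])
  also have "\<dots> = (\<Sum>q<d. \<Sum>n<d. \<Sum>n'<d. v $ n * cnj (v $ n') * ee d (- (int n' * s)) * ee d (int q * (t + int n - int n')))"
  proof (rule sum.cong[OF refl])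
    fix q assume "q \<in> {..<d}"
    then have qd: "q < d" by simp
    define qq where "qq = nat ((int q + s) mod int d)"
    have qqd: "qq < d" unfolding qq_def using assms by (simp add: nat_less_iff)
    have qqi: "int qq = (int q + s) mod int d" unfolding qq_def using assms by simp
    have "hatv v $ q * cnj (hatv v $ qq) * ee d (int q * t)
       = (\<Sum>n<d. v $ n * ee d (int n * int q)) * (\<Sum>n'<d. cnj (v $ n') * ee d (- (int n' * int qq))) * ee d (int q * t)"
      using hatv_entry[OF assms(1) qd] hatv_entry[OF assms(1) qqd] by (simp add: cnj_sum ee_cnj)
    also have "\<dots> = (\<Sum>n<d. \<Sum>n'<d. (v $ n * ee d (int n * int q)) * (cnj (v $ n') * ee d (- (int n' * int qq))) * ee d (int q * t))"
      by (simp only: sum_distrib_right, simp only: sum_distrib_left, simp only: sum_distrib_right)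
    also have "\<dots> = (\<Sum>n<d. \<Sum>n'<d. v $ n * cnj (v $ n') * ee d (- (int n' * s)) * ee d (int q * (t + int n - int n')))"
    proof (intro sum.cong refl)
      fix n n'
      have e1: "ee d (- (int n' * int qq)) = ee d (- (int n' * (int q + s)))"
        unfolding qqi using ee_modmul[OF assms(2), of "int q + s" "- int n'"] by (simp add: mult.commute)
      have "ee d (int n * int q) * ee d (- (int n' * (int q + s))) * ee d (int q * t)
         = ee d (- (int n' * s)) * ee d (int q * (t + int n - int n'))"
        unfolding ee_mult2 by (rule arg_cong[where f="ee d"]) (simp add: algebra_simps)
      then show "(v $ n * ee d (int n * int q)) * (cnj (v $ n') * ee d (- (int n' * int qq))) * ee d (int q * t)
         = v $ n * cnj (v $ n') * ee d (- (int n' * s)) * ee d (int q * (t + int n - int n'))"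
        unfolding e1 by (simp add: mult_ac)
    qed
    finally show "hatv v $ q * cnj (hatv v $ nat ((int q + s) mod int d)) * ee d (int q * t)
      = (\<Sum>n<d. \<Sum>n'<d. v $ n * cnj (v $ n') * ee d (- (int n' * s)) * ee d (int q * (t + int n - int n')))"
      unfolding qq_def .
  qed
  also have "\<dots> = (\<Sum>n<d. \<Sum>n'<d. \<Sum>q<d. v $ n * cnj (v $ n') * ee d (- (int n' * s)) * ee d (int q * (t + int n - int n')))"
    by (subst sum.swap, rule sum.cong[OF refl], rule sum.swap)
  also have "\<dots> = (\<Sum>n<d. \<Sum>n'<d. v $ n * cnj (v $ n') * ee d (- (int n' * s)) *
        (if int d dvd (t + int n - int n') then of_nat d else 0))"
    by (intro sum.cong refl) (simp only: sum_distrib_left[symmetric] ee_sum[OF assms(2)])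
  also have "\<dots> = (\<Sum>n<d. v $ n * cnj (v $ nat ((int n + t) mod int d)) * ee d (- ((int n + t) * s)) * of_nat d)"
  proof (rule sum.cong[OF refl])
    fix n assume "n \<in> {..<d}"
    define px where "px = nat ((int n + t) mod int d)"
    have pxd: "px < d" unfolding px_def using assms by (simp add: nat_less_iff)
    have pxi: "int px = (int n + t) mod int d" unfolding px_def using assms by simp
    have iff: "(int d dvd (t + int n - int n')) = (n' = px)" if "n' < d" for n'
    proof -
      have "(int d dvd (t + int n - int n')) = (int d dvd (int n' - (int n + t)))"
      proof -
        have "int n' - (int n + t) = - (t + int n - int n')" by simp
        then show ?thesis by (simp only: dvd_minus_iff)
      qed
      also have "\<dots> = (int n' mod int d = (int n + t) mod int d)" by (simp add: mod_eq_dvd_iff)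
      also have "\<dots> = (int n' = int px)" using that pxi by simp
      also have "\<dots> = (n' = px)" by simp
      finally show ?thesis .
    qed
    have "(\<Sum>n'<d. v $ n * cnj (v $ n') * ee d (- (int n' * s)) *
        (if int d dvd (t + int n - int n') then of_nat d else 0))
      = (\<Sum>n'<d. if n' = px then v $ n * cnj (v $ n') * ee d (- (int n' * s)) * of_nat d else 0)"
      using iff by (intro sum.cong refl) auto
    also have "\<dots> = v $ n * cnj (v $ px) * ee d (- (int px * s)) * of_nat d"
      using pxd by (simp add: sum.delta)
    also have "ee d (- (int px * s)) = ee d (- ((int n + t) * s))"
      unfolding pxi using ee_modmul[OF assms(2), of "int n + t" "- s"] by simp
    finally show "(\<Sum>n'<d. v $ n * cnj (v $ n') * ee d (- (int n' * s)) *
        (if int d dvd (t + int n - int n') then of_nat d else 0))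
      = v $ n * cnj (v $ nat ((int n + t) mod int d)) * ee d (- ((int n + t) * s)) * of_nat d"
      unfolding px_def .
  qed
  also have "\<dots> = of_nat d * (\<Sum>p<d. v $ p * cnj (v $ nat ((int p + t) mod int d)) * ee d (- ((int p + t) * s)))"
    by (simp add: sum_distrib_left mult_ac)
  finally show ?thesis .
qed

lemma prod4: "(\<Sum>j\<in>A. \<Sum>p\<in>B. f j p) * (\<Sum>j'\<in>A. \<Sum>p'\<in>B. g j' p') =
   (\<Sum>j\<in>A. \<Sum>p\<in>B. \<Sum>j'\<in>A. \<Sum>p'\<in>B. (f j p * g j' p' :: complex))"
  by (simp only: sum_distrib_right, simp only: sum_distrib_left)

lemma swap6: "(\<Sum>k\<in>A. \<Sum>l\<in>B. \<Sum>j\<in>C. \<Sum>p\<in>D. \<Sum>j'\<in>E. \<Sum>p'\<in>G. F k l j p j' p') =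
   (\<Sum>j\<in>C. \<Sum>p\<in>D. \<Sum>j'\<in>E. \<Sum>p'\<in>G. \<Sum>k\<in>A. \<Sum>l\<in>B. F k l j p j' p')"
proof -
  have "(\<Sum>k\<in>A. \<Sum>l\<in>B. \<Sum>j\<in>C. \<Sum>p\<in>D. \<Sum>j'\<in>E. \<Sum>p'\<in>G. F k l j p j' p') =
     (\<Sum>j\<in>C. \<Sum>k\<in>A. \<Sum>l\<in>B. \<Sum>p\<in>D. \<Sum>j'\<in>E. \<Sum>p'\<in>G. F k l j p j' p')" by (rule swap_out)
  also have "\<dots> = (\<Sum>j\<in>C. \<Sum>p\<in>D. \<Sum>k\<in>A. \<Sum>l\<in>B. \<Sum>j'\<in>E. \<Sum>p'\<in>G. F k l j p j' p')"
    by (rule sum.cong[OF refl], rule swap_out)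
  also have "\<dots> = (\<Sum>j\<in>C. \<Sum>p\<in>D. \<Sum>j'\<in>E. \<Sum>k\<in>A. \<Sum>l\<in>B. \<Sum>p'\<in>G. F k l j p j' p')"
    by (rule sum.cong[OF refl], rule sum.cong[OF refl], rule swap_out)
  also have "\<dots> = (\<Sum>j\<in>C. \<Sum>p\<in>D. \<Sum>j'\<in>E. \<Sum>p'\<in>G. \<Sum>k\<in>A. \<Sum>l\<in>B. F k l j p j' p')"
    by (rule sum.cong[OF refl], rule sum.cong[OF refl], rule sum.cong[OF refl], rule swap_out)
  finally show ?thesis .
qed

context
  fixes x m :: "complex vec" and d K L \<gamma> \<delta> \<kappa> \<xi> :: nat
  assumes d0: "0 < d" and dx: "dim_vec x = d" and dm: "dim_vec m = d"
    and sx: "\<forall>k<d. hatv x $ k \<noteq> 0 \<longrightarrow> k < \<gamma>"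
    and sm: "\<forall>n<d. m $ n \<noteq> 0 \<longrightarrow> n < \<delta>"
    and Kd: "K dvd d" and Ld: "L dvd d"
    and hK: "K = \<delta> - 1 + \<kappa>" "2 \<le> \<kappa>" "\<kappa> \<le> \<delta>"
    and hL: "L = \<gamma> - 1 + \<xi>" "1 \<le> \<xi>" "\<xi> \<le> \<gamma>"
begin

lemma K0: "0 < K" using hK by simp
lemma L0: "0 < L" using hL by simp
lemma Kle: "K \<le> d" using Kd d0 by (simp add: dvd_imp_le)
lemma Lle: "L \<le> d" using Ld d0 by (simp add: dvd_imp_le)
lemma dK: "d = K * (d div K)" using Kd by simp
lemma dL: "d = L * (d div L)" using Ld by simp

definition Cf :: "nat \<Rightarrow> nat \<Rightarrow> nat \<Rightarrow> nat \<Rightarrow> complex" where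
  "Cf j p j' p' = (1 / of_nat d * (1 / of_nat d)) * (hatv x $ j * m $ p * cnj (hatv x $ j') * cnj (m $ p'))
     * ee d (int p' * int j' - int p * int j)"

lemma stepA:
  fixes \<alpha> \<omega> k l :: nat
  shows "ee L (int \<alpha> * int l) * complex_of_real ((cmod (gsum d x m (k * (d div K)) (l * (d div L))))\<^sup>2) * ee K (int \<omega> * int k)
   = (\<Sum>j<d. \<Sum>p<d. \<Sum>j'<d. \<Sum>p'<d. Cf j p j' p' *
        (ee K (int k * (int \<omega> + int p - int p')) * ee L (int l * (int \<alpha> + int j' - int j))))"
proof -
  define qK where "qK = d div K"
  define qL where "qL = d div L"
  define T where "T j p = hatv x $ j * m $ p * ee d ((int p + int l * int qL) * (int k * int qK - int j))" for j p
  define g where "g = gsum d x m (k * qK) (l * qL)"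
  have g: "g = (1 / of_nat d) * (\<Sum>j<d. \<Sum>p<d. T j p)"
    unfolding g_def T_def using g_expand[OF dx dm d0, of "k * qK" "l * qL"] by simp
  have cg: "cnj g = (1 / of_nat d) * (\<Sum>j<d. \<Sum>p<d. cnj (T j p))"
    unfolding g by (simp add: cnj_sum)
  have "ee L (int \<alpha> * int l) * complex_of_real ((cmod g)\<^sup>2) * ee K (int \<omega> * int k)
     = ee L (int \<alpha> * int l) * (g * cnj g) * ee K (int \<omega> * int k)"
    by (simp only: complex_norm_square)
  also have "\<dots> = (\<Sum>j<d. \<Sum>p<d. \<Sum>j'<d. \<Sum>p'<d.
       ee L (int \<alpha> * int l) * ((1 / of_nat d * (1 / of_nat d)) * (T j p * cnj (T j' p'))) * ee K (int \<omega> * int k))"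
  proof -
    have "g * cnj g = (1 / of_nat d * (1 / of_nat d)) * ((\<Sum>j<d. \<Sum>p<d. T j p) * (\<Sum>j<d. \<Sum>p<d. cnj (T j p)))"
      unfolding cg unfolding g by (simp add: mult_ac)
    also have "\<dots> = (1 / of_nat d * (1 / of_nat d)) * (\<Sum>j<d. \<Sum>p<d. \<Sum>j'<d. \<Sum>p'<d. T j p * cnj (T j' p'))"
      by (simp only: prod4)
    finally show ?thesis by (simp add: sum_distrib_left sum_distrib_right)
  qed
  also have "\<dots> = (\<Sum>j<d. \<Sum>p<d. \<Sum>j'<d. \<Sum>p'<d. Cf j p j' p' *
        (ee K (int k * (int \<omega> + int p - int p')) * ee L (int l * (int \<alpha> + int j' - int j))))"
  proof (intro sum.cong refl)
    fix j p j' p'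
    have "ee L (int \<alpha> * int l) * ((1 / of_nat d * (1 / of_nat d)) * (T j p * cnj (T j' p'))) * ee K (int \<omega> * int k)
      = (1 / of_nat d * (1 / of_nat d)) * (hatv x $ j * m $ p * cnj (hatv x $ j') * cnj (m $ p')) *
        (ee L (int \<alpha> * int l) * ee d ((int p + int l * int qL) * (int k * int qK - int j))
          * ee d (- ((int p' + int l * int qL) * (int k * int qK - int j'))) * ee K (int \<omega> * int k))"
      unfolding T_def by (simp add: ee_cnj mult_ac)
    also have "\<dots> = Cf j p j' p' *
        (ee K (int k * (int \<omega> + int p - int p')) * ee L (int l * (int \<alpha> + int j' - int j)))"
      unfolding phase[OF K0 L0 d0 dK[folded qK_def] dL[folded qL_def]] Cf_def by (simp only: mult_ac)
    finally show "ee L (int \<alpha> * int l) * ((1 / of_nat d * (1 / of_nat d)) * (T j p * cnj (T j' p'))) * ee K (int \<omega> * int k)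
      = Cf j p j' p' * (ee K (int k * (int \<omega> + int p - int p')) * ee L (int l * (int \<alpha> + int j' - int j)))" .
  qed
  finally show ?thesis unfolding g_def qK_def qL_def .
qed

lemma stepB:
  fixes \<alpha> \<omega> :: nat
  shows "(\<Sum>k<K. \<Sum>l<L. ee L (int \<alpha> * int l) * complex_of_real ((cmod (gsum d x m (k * (d div K)) (l * (d div L))))\<^sup>2) * ee K (int \<omega> * int k))
   = (\<Sum>j<d. \<Sum>p<d. \<Sum>j'<d. \<Sum>p'<d. Cf j p j' p' *
        ((if int K dvd (int \<omega> + int p - int p') then of_nat K else 0) *
         (if int L dvd (int \<alpha> + int j' - int j) then of_nat L else 0)))"
proof -
  have "(\<Sum>k<K. \<Sum>l<L. ee L (int \<alpha> * int l) * complex_of_real ((cmod (gsum d x m (k * (d div K)) (l * (d div L))))\<^sup>2) * ee K (int \<omega> * int k))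
    = (\<Sum>k<K. \<Sum>l<L. \<Sum>j<d. \<Sum>p<d. \<Sum>j'<d. \<Sum>p'<d. Cf j p j' p' *
        (ee K (int k * (int \<omega> + int p - int p')) * ee L (int l * (int \<alpha> + int j' - int j))))"
    by (intro sum.cong refl) (rule stepA)
  also have "\<dots> = (\<Sum>j<d. \<Sum>p<d. \<Sum>j'<d. \<Sum>p'<d. \<Sum>k<K. \<Sum>l<L. Cf j p j' p' *
        (ee K (int k * (int \<omega> + int p - int p')) * ee L (int l * (int \<alpha> + int j' - int j))))"
    by (rule swap6)
  also have "\<dots> = (\<Sum>j<d. \<Sum>p<d. \<Sum>j'<d. \<Sum>p'<d. Cf j p j' p' *
        ((if int K dvd (int \<omega> + int p - int p') then of_nat K else 0) *
         (if int L dvd (int \<alpha> + int j' - int j) then of_nat L else 0)))"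
  proof (intro sum.cong refl)
    fix j p j' p' :: nat
    have "(\<Sum>k<K. \<Sum>l<L. Cf j p j' p' *
        (ee K (int k * (int \<omega> + int p - int p')) * ee L (int l * (int \<alpha> + int j' - int j))))
      = Cf j p j' p' * ((\<Sum>k<K. ee K (int k * (int \<omega> + int p - int p'))) * (\<Sum>l<L. ee L (int l * (int \<alpha> + int j' - int j))))"
      by (rule sym, simp only: sum_product, simp only: sum_distrib_left)
    also have "\<dots> = Cf j p j' p' *
        ((if int K dvd (int \<omega> + int p - int p') then of_nat K else 0) *
         (if int L dvd (int \<alpha> + int j' - int j) then of_nat L else 0))"
      by (simp only: ee_sum[OF K0] ee_sum[OF L0])
    finally show "(\<Sum>k<K. \<Sum>l<L. Cf j p j' p' *
        (ee K (int k * (int \<omega> + int p - int p')) * ee L (int l * (int \<alpha> + int j' - int j))))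
      = Cf j p j' p' *
        ((if int K dvd (int \<omega> + int p - int p') then of_nat K else 0) *
         (if int L dvd (int \<alpha> + int j' - int j) then of_nat L else 0))" .
  qed
  finally show ?thesis .
qed

lemma arL:
  fixes \<alpha> j j' :: nat and s :: int
  assumes "\<alpha> < L" "j < \<gamma>" "j' < \<gamma>"
    and hs: "(s = int \<alpha> \<and> \<alpha> \<le> \<xi> - 1) \<or> (s = int \<alpha> - int L \<and> \<gamma> \<le> \<alpha>)"
  shows "(int L dvd (int \<alpha> + int j' - int j)) \<longleftrightarrow> j' = nat ((int j - s) mod int d)"
proof -
  have P: "0 < int L" using L0 by simp
  have PD: "int L \<le> int d" using Lle by simp
  have dv: "int L dvd (int \<alpha> - s)" using hs by auto
  have ab: "\<bar>int j' - int j + s\<bar> < int L" using hs assms hL by auto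
  have bD: "int j' < int d" using assms hL Lle by simp
  have "(int L dvd (int \<alpha> + int j' - int j)) \<longleftrightarrow> int j' = (int j - s) mod int d"
    using window[OF P PD dv ab _ bD] by simp
  also have "\<dots> \<longleftrightarrow> j' = nat ((int j - s) mod int d)" using d0 by auto
  finally show ?thesis .
qed

lemma arK:
  fixes \<omega> p p' :: nat and t :: int
  assumes "\<omega> < K" "p < \<delta>" "p' < \<delta>"
    and ht: "(t = int \<omega> \<and> \<omega> \<le> \<kappa> - 1) \<or> (t = int \<omega> - int K \<and> \<delta> \<le> \<omega>)"
  shows "(int K dvd (int \<omega> + int p - int p')) \<longleftrightarrow> p' = nat ((int p + t) mod int d)"
proof -
  have P: "0 < int K" using K0 by simp
  have PD: "int K \<le> int d" using Kle by simp
  have dv: "int K dvd (- int \<omega> - - t)" using ht by auto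
  have ab: "\<bar>int p' - int p + - t\<bar> < int K" using ht assms hK by auto
  have bD: "int p' < int d" using assms hK Kle by simp
  have "(int K dvd (int \<omega> + int p - int p')) \<longleftrightarrow> int K dvd (- int \<omega> + int p' - int p)"
  proof -
    have "- int \<omega> + int p' - int p = - (int \<omega> + int p - int p')" by simp
    then show ?thesis by (simp only: dvd_minus_iff)
  qed
  also have "\<dots> \<longleftrightarrow> int p' = (int p - - t) mod int d"
    using window[OF P PD dv ab _ bD] by simp
  also have "\<dots> \<longleftrightarrow> p' = nat ((int p + t) mod int d)" using d0 by auto
  finally show ?thesis .
qed

lemma Cf_nz:
  assumes "Cf j p j' p' \<noteq> 0"
  shows "hatv x $ j \<noteq> 0" "m $ p \<noteq> 0" "hatv x $ j' \<noteq> 0" "m $ p' \<noteq> 0"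
  using assms unfolding Cf_def by auto

lemma stepC:
  fixes \<alpha> \<omega> :: nat and s t :: int
  assumes "\<alpha> < L" "\<omega> < K"
    and hs: "(s = int \<alpha> \<and> \<alpha> \<le> \<xi> - 1) \<or> (s = int \<alpha> - int L \<and> \<gamma> \<le> \<alpha>)"
    and ht: "(t = int \<omega> \<and> \<omega> \<le> \<kappa> - 1) \<or> (t = int \<omega> - int K \<and> \<delta> \<le> \<omega>)"
  shows "(\<Sum>j<d. \<Sum>p<d. \<Sum>j'<d. \<Sum>p'<d. Cf j p j' p' *
        ((if int K dvd (int \<omega> + int p - int p') then of_nat K else 0) *
         (if int L dvd (int \<alpha> + int j' - int j) then of_nat L else 0)))
    = (\<Sum>j<d. \<Sum>p<d. Cf j p (nat ((int j - s) mod int d)) (nat ((int p + t) mod int d)) * (of_nat K * of_nat L))"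
proof (intro sum.cong refl)
  fix j p assume "j \<in> {..<d}" "p \<in> {..<d}"
  then have jd: "j < d" and pd: "p < d" by auto
  define jx where "jx = nat ((int j - s) mod int d)"
  define px where "px = nat ((int p + t) mod int d)"
  have jxd: "jx < d" unfolding jx_def using d0 by (simp add: nat_less_iff)
  have pxd: "px < d" unfolding px_def using d0 by (simp add: nat_less_iff)
  have pw: "Cf j p j' p' *
        ((if int K dvd (int \<omega> + int p - int p') then of_nat K else 0) *
         (if int L dvd (int \<alpha> + int j' - int j) then of_nat L else 0))
      = (if p' = px then (if j' = jx then Cf j p j' p' * (of_nat K * of_nat L) else 0) else 0)"
    if "j' < d" "p' < d" for j' p'
  proof (cases "Cf j p j' p' = 0")
    case True then show ?thesis by auto
  next
    case False
    note nz = Cf_nz[OF False]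
    have "j < \<gamma>" using nz(1) sx jd by blast
    moreover have "p < \<delta>" using nz(2) sm pd by blast
    moreover have "j' < \<gamma>" using nz(3) sx that by blast
    moreover have "p' < \<delta>" using nz(4) sm that by blast
    ultimately have e1: "(int L dvd (int \<alpha> + int j' - int j)) = (j' = jx)"
      and e2: "(int K dvd (int \<omega> + int p - int p')) = (p' = px)"
      using arL[OF assms(1) _ _ hs] arK[OF assms(2) _ _ ht] unfolding jx_def px_def by auto
    show ?thesis unfolding e1 e2 by simp
  qed
  have "(\<Sum>j'<d. \<Sum>p'<d. Cf j p j' p' *
        ((if int K dvd (int \<omega> + int p - int p') then of_nat K else 0) *
         (if int L dvd (int \<alpha> + int j' - int j) then of_nat L else 0)))
     = (\<Sum>j'<d. \<Sum>p'<d. (if p' = px then (if j' = jx then Cf j p j' p' * (of_nat K * of_nat L) else 0) else 0))"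
    using pw by (intro sum.cong refl) auto
  also have "\<dots> = Cf j p jx px * (of_nat K * of_nat L)"
    using jxd pxd by (simp add: sum.delta)
  finally show "(\<Sum>j'<d. \<Sum>p'<d. Cf j p j' p' *
        ((if int K dvd (int \<omega> + int p - int p') then of_nat K else 0) *
         (if int L dvd (int \<alpha> + int j' - int j) then of_nat L else 0)))
     = Cf j p (nat ((int j - s) mod int d)) (nat ((int p + t) mod int d)) * (of_nat K * of_nat L)"
    unfolding jx_def px_def .
qed

lemma core:
  fixes \<alpha> \<omega> :: nat and s t :: int
  assumes "\<alpha> < L" "\<omega> < K"
    and hs: "(s = int \<alpha> \<and> \<alpha> \<le> \<xi> - 1) \<or> (s = int \<alpha> - int L \<and> \<gamma> \<le> \<alpha>)"
    and ht: "(t = int \<omega> \<and> \<omega> \<le> \<kappa> - 1) \<or> (t = int \<omega> - int K \<and> \<delta> \<le> \<omega>)"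
  shows "(\<Sum>k<K. \<Sum>l<L. ee L (int \<alpha> * int l) * complex_of_real ((cmod (gsum d x m (k * (d div K)) (l * (d div L))))\<^sup>2) * ee K (int \<omega> * int k))
    = complex_of_real (real K * real L / real d ^ 3)
      * idx (dft_mat d *\<^sub>v hadamard (hatv x) (shiftv (- s) (conjv (hatv x)))) t
      * idx (dft_mat d *\<^sub>v hadamard (hatv m) (shiftv s (conjv (hatv m)))) t"
proof -
  define jx where "jx j = nat ((int j - s) mod int d)" for j
  define px where "px p = nat ((int p + t) mod int d)" for p
  define aA where "aA j = hatv x $ j * cnj (hatv x $ jx j) * ee d (int j * t)" for j
  define bB where "bB p = m $ p * cnj (m $ px p) * ee d (- ((int p + t) * s))" for p
  define c where "c = complex_of_real (real K * real L / real d ^ 3)"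
  have jxi: "int (jx j) = (int j - s) mod int d" for j unfolding jx_def using d0 by simp
  have pxi: "int (px p) = (int p + t) mod int d" for p unfolding px_def using d0 by simp
  have cd: "c * of_nat d = 1 / of_nat d * (1 / of_nat d) * (of_nat K * of_nat L)"
    unfolding c_def using d0 by (simp add: field_simps power3_eq_cube)
  have "(\<Sum>k<K. \<Sum>l<L. ee L (int \<alpha> * int l) * complex_of_real ((cmod (gsum d x m (k * (d div K)) (l * (d div L))))\<^sup>2) * ee K (int \<omega> * int k))
     = (\<Sum>j<d. \<Sum>p<d. Cf j p (jx j) (px p) * (of_nat K * of_nat L))"
    unfolding stepB stepC[OF assms] jx_def px_def ..
  also have "\<dots> = (\<Sum>j<d. \<Sum>p<d. (c * of_nat d) * (aA j * bB p))"
  proof (intro sum.cong refl)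
    fix j p
    have "ee d (int (px p) * int (jx j) - int p * int j) = ee d (int j * t) * ee d (- ((int p + t) * s))"
    proof -
      have "ee d (int (px p) * int (jx j) - int p * int j) = ee d ((int p + t) mod int d * ((int j - s) mod int d) + - (int p * int j))"
        unfolding pxi jxi by simp
      also have "\<dots> = ee d ((int p + t) * (int j - s) + - (int p * int j))" by (rule ee_mod2[OF d0])
      also have "\<dots> = ee d (int j * t) * ee d (- ((int p + t) * s))"
        unfolding ee_mult2 by (rule arg_cong[where f="ee d"]) (simp add: algebra_simps)
      finally show ?thesis .
    qed
    then show "Cf j p (jx j) (px p) * (of_nat K * of_nat L) = (c * of_nat d) * (aA j * bB p)"
      unfolding cd Cf_def aA_def bB_def by (simp add: mult_ac)
  qed
  also have "\<dots> = (c * of_nat d) * ((\<Sum>j<d. aA j) * (\<Sum>p<d. bB p))"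
    by (rule sym, simp only: sum_product, simp only: sum_distrib_left)
  also have "\<dots> = c * (\<Sum>j<d. aA j) * (of_nat d * (\<Sum>p<d. bB p))"
    by (simp only: mult_ac)
  also have "(\<Sum>j<d. aA j) = idx (dft_mat d *\<^sub>v hadamard (hatv x) (shiftv (- s) (conjv (hatv x)))) t"
    unfolding idx_dft[OF dx d0] aA_def jx_def by simp
  also have "of_nat d * (\<Sum>p<d. bB p) = idx (dft_mat d *\<^sub>v hadamard (hatv m) (shiftv s (conjv (hatv m)))) t"
    unfolding idxB[OF dm d0] bB_def px_def ..
  finally show ?thesis unfolding c_def .
qed

lemma Yt_split:
  fixes N :: "real mat" and \<alpha> \<omega> :: nat
  assumes "\<alpha> < L" "\<omega> < K"
  shows "tildeT K L (subsamp d K L (meas d x m N)) $$ (\<alpha>,\<omega>) =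
    (\<Sum>k<K. \<Sum>l<L. ee L (int \<alpha> * int l) * complex_of_real ((cmod (gsum d x m (k * (d div K)) (l * (d div L))))\<^sup>2) * ee K (int \<omega> * int k))
    + tildeT K L (subsamp d K L N) $$ (\<alpha>,\<omega>)"
proof -
  have c1: "subsamp d K L (meas d x m N) \<in> carrier_mat K L" by (simp add: subsamp_def)
  have c2: "subsamp d K L N \<in> carrier_mat K L" by (simp add: subsamp_def)
  have kk: "k * d div K = k * (d div K)" for k using Kd by (simp add: div_mult_swap)
  have ll: "l * d div L = l * (d div L)" for l using Ld by (simp add: div_mult_swap)
  have kd: "k * (d div K) < d" if "k < K" for k
  proof -
    have "k * (d div K) < K * (d div K)" using that d0 dK by (metis mult_less_cancel2 neq0_conv mult_0_right)
    then show ?thesis using dK by simp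
  qed
  have ld: "l * (d div L) < d" if "l < L" for l
  proof -
    have "l * (d div L) < L * (d div L)" using that d0 dL by (metis mult_less_cancel2 neq0_conv mult_0_right)
    then show ?thesis using dL by simp
  qed
  have "tildeT K L (subsamp d K L (meas d x m N)) $$ (\<alpha>,\<omega>) =
     (\<Sum>k<K. \<Sum>l<L. ee L (int \<alpha> * int l) * complex_of_real ((cmod (gsum d x m (k * (d div K)) (l * (d div L))))\<^sup>2) * ee K (int \<omega> * int k)
        + ee L (int \<alpha> * int l) * complex_of_real (N $$ (k * (d div K), l * (d div L))) * ee K (int \<omega> * int k))"
    unfolding tildeT_entry[OF c1 assms]
  proof (intro sum.cong refl)
    fix k l assume "k \<in> {..<K}" "l \<in> {..<L}"
    then have "k < K" "l < L" by auto
    then have "subsamp d K L (meas d x m N) $$ (k, l) = (cmod (gsum d x m (k * (d div K)) (l * (d div L))))\<^sup>2 + N $$ (k * (d div K), l * (d div L))"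
      using kd ld by (simp add: subsamp_def meas_def gsum_def kk ll)
    then show "ee L (int \<alpha> * int l) * complex_of_real (subsamp d K L (meas d x m N) $$ (k, l)) * ee K (int \<omega> * int k) =
       ee L (int \<alpha> * int l) * complex_of_real ((cmod (gsum d x m (k * (d div K)) (l * (d div L))))\<^sup>2) * ee K (int \<omega> * int k)
        + ee L (int \<alpha> * int l) * complex_of_real (N $$ (k * (d div K), l * (d div L))) * ee K (int \<omega> * int k)"
      by (simp add: distrib_left distrib_right)
  qed
  also have "\<dots> = (\<Sum>k<K. \<Sum>l<L. ee L (int \<alpha> * int l) * complex_of_real ((cmod (gsum d x m (k * (d div K)) (l * (d div L))))\<^sup>2) * ee K (int \<omega> * int k))
     + (\<Sum>k<K. \<Sum>l<L. ee L (int \<alpha> * int l) * complex_of_real (N $$ (k * (d div K), l * (d div L))) * ee K (int \<omega> * int k))"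
    by (simp only: sum.distrib)
  also have "(\<Sum>k<K. \<Sum>l<L. ee L (int \<alpha> * int l) * complex_of_real (N $$ (k * (d div K), l * (d div L))) * ee K (int \<omega> * int k))
     = tildeT K L (subsamp d K L N) $$ (\<alpha>,\<omega>)"
    unfolding tildeT_entry[OF c2 assms]
    by (intro sum.cong refl) (simp add: subsamp_def kk ll)
  finally show ?thesis .
qed

end

theorem mainTheorem5:
  fixes x m :: "complex vec" and N :: "real mat" and d K L \<gamma> \<delta> \<kappa> \<xi> :: nat
  assumes "0 < d" and "dim_vec x = d" and "dim_vec m = d" and "N \<in> carrier_mat d d"
    and "\<forall>k<d. hatv x $ k \<noteq> 0 \<longrightarrow> k < \<gamma>"
    and "\<forall>n<d. m $ n \<noteq> 0 \<longrightarrow> n < \<delta>"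
    and "K dvd d" and "L dvd d"
    and "K = \<delta> - 1 + \<kappa>" and "2 \<le> \<kappa>" and "\<kappa> \<le> \<delta>"
    and "L = \<gamma> - 1 + \<xi>" and "1 \<le> \<xi>" and "\<xi> \<le> \<gamma>"
  shows "let Yt = tildeT K L (subsamp d K L (meas d x m N));
             Nt = tildeT K L (subsamp d K L N);
             c = complex_of_real (real K * real L / real d ^ 3);
             A = (\<lambda>s::int. dft_mat d *\<^sub>v hadamard (hatv x) (shiftv s (conjv (hatv x))));
             B = (\<lambda>s::int. dft_mat d *\<^sub>v hadamard (hatv m) (shiftv s (conjv (hatv m))))
         in \<forall>\<alpha><L. \<forall>\<omega><K.
           (\<alpha> \<le> \<xi> - 1 \<and> \<omega> \<le> \<kappa> - 1 \<longrightarrow>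
              Yt $$ (\<alpha>,\<omega>) = c * idx (A (- int \<alpha>)) (int \<omega>) * idx (B (int \<alpha>)) (int \<omega>) + Nt $$ (\<alpha>,\<omega>)) \<and>
           (\<alpha> \<le> \<xi> - 1 \<and> \<delta> \<le> \<omega> \<longrightarrow>
              Yt $$ (\<alpha>,\<omega>) = c * idx (A (- int \<alpha>)) (int \<omega> - int K) * idx (B (int \<alpha>)) (int \<omega> - int K) + Nt $$ (\<alpha>,\<omega>)) \<and>
           (\<gamma> \<le> \<alpha> \<and> \<omega> \<le> \<kappa> - 1 \<longrightarrow>
              Yt $$ (\<alpha>,\<omega>) = c * idx (A (int L - int \<alpha>)) (int \<omega>) * idx (B (int \<alpha> - int L)) (int \<omega>) + Nt $$ (\<alpha>,\<omega>)) \<and>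
           (\<gamma> \<le> \<alpha> \<and> \<delta> \<le> \<omega> \<longrightarrow>
              Yt $$ (\<alpha>,\<omega>) = c * idx (A (int L - int \<alpha>)) (int \<omega> - int K) * idx (B (int \<alpha> - int L)) (int \<omega> - int K) + Nt $$ (\<alpha>,\<omega>))"
proof -
  note C = core[OF assms(1,2,3) assms(5,6,7,8) assms(9,10,11) assms(12,13,14)]
  note Y = Yt_split[OF assms(1,2,3) assms(5,6,7,8) assms(9,10,11) assms(12,13,14)]
  have e: "- (int \<alpha> - int L) = int L - int \<alpha>" for \<alpha> by simp
  show ?thesis unfolding Let_def
  proof (intro allI impI conjI)
    fix \<alpha> \<omega> :: nat assume a: "\<alpha> < L" and w: "\<omega> < K"
    note Y' = Y[OF a w, of N]
    {
      assume h: "\<alpha> \<le> \<xi> - 1 \<and> \<omega> \<le> \<kappa> - 1"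
      show "tildeT K L (subsamp d K L (meas d x m N)) $$ (\<alpha>, \<omega>) =
        complex_of_real (real K * real L / real d ^ 3) *
        idx (dft_mat d *\<^sub>v hadamard (hatv x) (shiftv (- int \<alpha>) (conjv (hatv x)))) (int \<omega>) *
        idx (dft_mat d *\<^sub>v hadamard (hatv m) (shiftv (int \<alpha>) (conjv (hatv m)))) (int \<omega>) +
        tildeT K L (subsamp d K L N) $$ (\<alpha>, \<omega>)"
        unfolding Y' using C[OF a w, of "int \<alpha>" "int \<omega>"] h by simp
    next
      assume h: "\<alpha> \<le> \<xi> - 1 \<and> \<delta> \<le> \<omega>"
      show "tildeT K L (subsamp d K L (meas d x m N)) $$ (\<alpha>, \<omega>) =
        complex_of_real (real K * real L / real d ^ 3) *
        idx (dft_mat d *\<^sub>v hadamard (hatv x) (shiftv (- int \<alpha>) (conjv (hatv x)))) (int \<omega> - int K) *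
        idx (dft_mat d *\<^sub>v hadamard (hatv m) (shiftv (int \<alpha>) (conjv (hatv m)))) (int \<omega> - int K) +
        tildeT K L (subsamp d K L N) $$ (\<alpha>, \<omega>)"
        unfolding Y' using C[OF a w, of "int \<alpha>" "int \<omega> - int K"] h by simp
    next
      assume h: "\<gamma> \<le> \<alpha> \<and> \<omega> \<le> \<kappa> - 1"
      show "tildeT K L (subsamp d K L (meas d x m N)) $$ (\<alpha>, \<omega>) =
        complex_of_real (real K * real L / real d ^ 3) *
        idx (dft_mat d *\<^sub>v hadamard (hatv x) (shiftv (int L - int \<alpha>) (conjv (hatv x)))) (int \<omega>) *
        idx (dft_mat d *\<^sub>v hadamard (hatv m) (shiftv (int \<alpha> - int L) (conjv (hatv m)))) (int \<omega>) +
        tildeT K L (subsamp d K L N) $$ (\<alpha>, \<omega>)"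
        unfolding Y' using C[OF a w, of "int \<alpha> - int L" "int \<omega>"] h unfolding e by simp
    next
      assume h: "\<gamma> \<le> \<alpha> \<and> \<delta> \<le> \<omega>"
      show "tildeT K L (subsamp d K L (meas d x m N)) $$ (\<alpha>, \<omega>) =
        complex_of_real (real K * real L / real d ^ 3) *
        idx (dft_mat d *\<^sub>v hadamard (hatv x) (shiftv (int L - int \<alpha>) (conjv (hatv x)))) (int \<omega> - int K) *
        idx (dft_mat d *\<^sub>v hadamard (hatv m) (shiftv (int \<alpha> - int L) (conjv (hatv m)))) (int \<omega> - int K) +
        tildeT K L (subsamp d K L N) $$ (\<alpha>, \<omega>)"
        unfolding Y' using C[OF a w, of "int \<alpha> - int L" "int \<omega> - int K"] h unfolding e by simp
    }
  qed
qed

end
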